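(* Let $\Gamma$ be a typing environment, $e$ an application term, $B$ a base type and $b$ a ground base type. If $\Gamma\vdash e \Rightarrow B$ (concrete algorithmic inference) and $b\sqsubseteq B$, then $\Gamma\vdash e : b$ (declarative typing).
   Context: Fix a set of type constructors, each with a fixed arity, and an infinite set of type variables. Base types are $B ::= \tau \mid C\,B_1\ldots B_k$; ground base types $b$ contain no type variables. Types are $T ::= B\mid B\to T$; ground types $t ::= b \mid b\to t$. A polytype is $\forall\tau_1\ldots\tau_n.T$. A component library $\Lambda$ is a finite map from component names $c$ to polytypes; the arity of $c$ is the number of arrows in $\Lambda(c)$. Substitutions $\sigma$ map type variables to base types (identity elsewhere). A bottom type $\bot$ is added; $\mathbf{B}_\bot$ = base types $\cup\{\bot\}$. $T'\sqsubseteq T$ iff $T'=\sigma T$ for some $\sigma$; $\bot\sqsubseteq B$ for all $B$; $\equiv$ is mutual $\sqsubseteq$. The bottom substitution $\sigma_\bot$ sends every type to $\bot$, and every substitution maps $\bot$ to $\bot$. $\mathrm{mgu}$ denotes the most general (simultaneous) unifier of a sequence of pairs of types, which is $\sigma_\bot$ if no proper unifier exists and the identity for the empty sequence. $\mathrm{fresh}(\forall\bar\tau.T)$ renames $\bar\tau$ to fresh variables. Type transformer: if $\mathrm{fresh}(\Lambda(c))=B'_1\to\cdots\to B'_m\to B'$ then $[\![c]\!](B_1,\ldots,B_m)=\sigma B'$ with $\sigma=\mathrm{mgu}(B_1,B'_1;\ldots;B_m,B'_m)$. Terms (in $\eta$-long form): application terms $e ::= x \mid c(e_1,\ldots,e_m)$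 with $m$ the arity of $c$; normal-form terms $E ::= e\mid \lambda x.E$. A typing environment $\Gamma$ maps variables to ground base types. Declarative typing $\Gamma\vdash E:t$ ($t$ ground): (Var) if $\Gamma(x)=b$ then $\Gamma\vdash x:b$; (App) if $\Lambda(c)=\forall\bar\tau.T$, $\sigma T=b_1\to\cdots\to b_m\to b$ is ground and $\Gamma\vdash e_i:b_i$ for all $i$, then $\Gamma\vdash c(e_1,\ldots,e_m):b$; (Fun) if $\Gamma,x{:}b\vdash E:t$ then $\Gamma\vdash\lambda x.E : b\to t$. Concrete algorithmic inference $\Gamma\vdash e\Rightarrow B$: if $\Gamma(x)=b$ then $\Gamma\vdash x\Rightarrow b$; if $\Gamma\vdash e_i\Rightarrow B_i$ for all $i$ then $\Gamma\vdash c(e_1,\ldots,e_m)\Rightarrow [\![c]\!](B_1,\ldots,B_m)$. *)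

theory Defs
  imports Main
begin

text \<open>Type variables are natural numbers; type constructors range over an arbitrary
  type 'c, each with a fixed arity given by a function ar :: 'c => nat.\<close>

type_synonym tvar = nat

datatype 'c btype = TV tvar | TC 'c "'c btype list"

fun tvars :: "'c btype \<Rightarrow> tvar set" where
  "tvars (TV v) = {v}"
| "tvars (TC c bs) = (\<Union>b\<in>set bs. tvars b)"

definition ground :: "'c btype \<Rightarrow> bool" where
  "ground b \<longleftrightarrow> tvars b = {}"

fun wfb :: "('c \<Rightarrow> nat) \<Rightarrow> 'c btype \<Rightarrow> bool" where
  "wfb ar (TV v) = True"
| "wfb ar (TC c bs) = (length bs = ar c \<and> (\<forall>b\<in>set bs. wfb ar b))"

text \<open>A type B1 -> ... -> Bm -> B is represented as the pair ([B1,...,Bm], B).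
  A polytype quantifies over all type variables of its body, so it is represented by its body.\<close>
type_synonym 'c ty = "'c btype list \<times> 'c btype"

text \<open>Base types extended with bottom: None is the bottom type.\<close>
type_synonym 'c bbtype = "'c btype option"

type_synonym 'c subst = "tvar \<Rightarrow> 'c btype"

fun subst :: "'c subst \<Rightarrow> 'c btype \<Rightarrow> 'c btype" where
  "subst \<sigma> (TV v) = \<sigma> v"
| "subst \<sigma> (TC c bs) = TC c (map (subst \<sigma>) bs)"

definition is_subst :: "('c \<Rightarrow> nat) \<Rightarrow> 'c subst \<Rightarrow> bool" where
  "is_subst ar \<sigma> \<longleftrightarrow> (\<forall>v. wfb ar (\<sigma> v))"

text \<open>Extended substitutions: None is the bottom substitution; every substitution maps
  bottom to bottom.\<close>
fun app_subst :: "'c subst option \<Rightarrow> 'c bbtype \<Rightarrow> 'c bbtype" where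
  "app_subst None _ = None"
| "app_subst (Some \<sigma>) None = None"
| "app_subst (Some \<sigma>) (Some B) = Some (subst \<sigma> B)"

definition inst_le :: "('c \<Rightarrow> nat) \<Rightarrow> 'c bbtype \<Rightarrow> 'c bbtype \<Rightarrow> bool" where
  "inst_le ar T' T \<longleftrightarrow> T' = None \<or> (\<exists>\<sigma>. is_subst ar \<sigma> \<and> T' = app_subst (Some \<sigma>) T)"

definition is_unifier :: "('c \<Rightarrow> nat) \<Rightarrow> ('c bbtype \<times> 'c bbtype) list \<Rightarrow> 'c subst \<Rightarrow> bool" where
  "is_unifier ar ps \<sigma> \<longleftrightarrow> is_subst ar \<sigma> \<and>
     (\<forall>(x, y)\<in>set ps. app_subst (Some \<sigma>) x = app_subst (Some \<sigma>) y)"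

definition is_mgu :: "('c \<Rightarrow> nat) \<Rightarrow> ('c bbtype \<times> 'c bbtype) list \<Rightarrow> 'c subst \<Rightarrow> bool" where
  "is_mgu ar ps \<sigma> \<longleftrightarrow> is_unifier ar ps \<sigma> \<and>
     (\<forall>\<theta>. is_unifier ar ps \<theta> \<longrightarrow> (\<exists>\<delta>. is_subst ar \<delta> \<and> (\<forall>v. \<theta> v = subst \<delta> (\<sigma> v))))"

definition mgu :: "('c \<Rightarrow> nat) \<Rightarrow> ('c bbtype \<times> 'c bbtype) list \<Rightarrow> 'c subst option" where
  "mgu ar ps = (if ps = [] then Some TV
     else if \<exists>\<sigma>. is_unifier ar ps \<sigma> then Some (SOME \<sigma>. is_mgu ar ps \<sigma>) else None)"

type_synonym ('n, 'c) library = "'n \<Rightarrow> 'c ty option"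

definition wf_library :: "('c \<Rightarrow> nat) \<Rightarrow> ('n, 'c) library \<Rightarrow> bool" where
  "wf_library ar \<Lambda> \<longleftrightarrow> finite (dom \<Lambda>) \<and>
     (\<forall>c args res. \<Lambda> c = Some (args, res) \<longrightarrow> (\<forall>B\<in>set (res # args). wfb ar B))"

definition ty_tvars :: "'c ty \<Rightarrow> tvar set" where
  "ty_tvars T = (\<Union>B\<in>set (snd T # fst T). tvars B)"

definition rename_ty :: "(tvar \<Rightarrow> tvar) \<Rightarrow> 'c ty \<Rightarrow> 'c ty" where
  "rename_ty \<rho> T = (map (subst (TV \<circ> \<rho>)) (fst T), subst (TV \<circ> \<rho>) (snd T))"

text \<open>The type transformer [[c]](B1,...,Bm): the polytype of c is renamed apart
  (injectively) from the type variables of the arguments, then the mgu is applied.\<close>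
definition type_transformer ::
  "('c \<Rightarrow> nat) \<Rightarrow> ('n, 'c) library \<Rightarrow> 'n \<Rightarrow> 'c bbtype list \<Rightarrow> 'c bbtype" where
  "type_transformer ar \<Lambda> c Bs = (case \<Lambda> c of None \<Rightarrow> None
     | Some T \<Rightarrow>
        (let \<rho> = (SOME \<rho>. inj \<rho> \<and>
                    \<rho> ` ty_tvars T \<inter> (\<Union>B\<in>set Bs. case B of None \<Rightarrow> {} | Some B \<Rightarrow> tvars B) = {});
             (args', res') = rename_ty \<rho> T
         in app_subst (mgu ar (zip Bs (map Some args'))) (Some res')))"

datatype ('n, 'v) aterm = Var 'v | App 'n "('n, 'v) aterm list"

datatype ('n, 'v) nterm = ATerm "('n, 'v) aterm" | Lam 'v "('n, 'v) nterm"

type_synonym ('v, 'c) env = "'v \<Rightarrow> 'c btype option"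

definition wf_env :: "('c \<Rightarrow> nat) \<Rightarrow> ('v, 'c) env \<Rightarrow> bool" where
  "wf_env ar \<Gamma> \<longleftrightarrow> (\<forall>x b. \<Gamma> x = Some b \<longrightarrow> ground b \<and> wfb ar b)"

inductive decl_typing :: "('c \<Rightarrow> nat) \<Rightarrow> ('n, 'c) library \<Rightarrow> ('v, 'c) env \<Rightarrow> ('n, 'v) aterm \<Rightarrow> 'c btype \<Rightarrow> bool"
  for ar \<Lambda> \<Gamma> where
  DVar: "\<Gamma> x = Some b \<Longrightarrow> decl_typing ar \<Lambda> \<Gamma> (Var x) b"
| DApp: "\<lbrakk> \<Lambda> c = Some (args, res); is_subst ar \<sigma>; length es = length args;
           \<forall>B\<in>set (res # args). ground (subst \<sigma> B);
           list_all2 (decl_typing ar \<Lambda> \<Gamma>) es (map (subst \<sigma>) args) \<rbrakk>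
         \<Longrightarrow> decl_typing ar \<Lambda> \<Gamma> (App c es) (subst \<sigma> res)"

inductive decl_typing_nf :: "('c \<Rightarrow> nat) \<Rightarrow> ('n, 'c) library \<Rightarrow> ('v, 'c) env \<Rightarrow> ('n, 'v) nterm \<Rightarrow> 'c ty \<Rightarrow> bool"
  for ar \<Lambda> where
  DAT: "decl_typing ar \<Lambda> \<Gamma> e b \<Longrightarrow> decl_typing_nf ar \<Lambda> \<Gamma> (ATerm e) ([], b)"
| DFun: "\<lbrakk> ground b; wfb ar b; decl_typing_nf ar \<Lambda> (\<Gamma>(x \<mapsto> b)) E (bs, r) \<rbrakk>
         \<Longrightarrow> decl_typing_nf ar \<Lambda> \<Gamma> (Lam x E) (b # bs, r)"

inductive infer :: "('c \<Rightarrow> nat) \<Rightarrow> ('n, 'c) library \<Rightarrow> ('v, 'c) env \<Rightarrow> ('n, 'v) aterm \<Rightarrow> 'c bbtype \<Rightarrow> bool"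
  for ar \<Lambda> \<Gamma> where
  IVar: "\<Gamma> x = Some b \<Longrightarrow> infer ar \<Lambda> \<Gamma> (Var x) (Some b)"
| IApp: "\<lbrakk> \<Lambda> c = Some (args, res); length es = length args;
           list_all2 (infer ar \<Lambda> \<Gamma>) es Bs \<rbrakk>
         \<Longrightarrow> infer ar \<Lambda> \<Gamma> (App c es) (type_transformer ar \<Lambda> c Bs)"

end

theory Submission
  imports Defs
begin

lemma subst_comp: "subst \<sigma> (subst \<tau> t) = subst (\<lambda>x. subst \<sigma> (\<tau> x)) t"
  by (induction t) auto

lemma subst_cong: "(\<And>x. x \<in> tvars t \<Longrightarrow> \<sigma> x = \<tau> x) \<Longrightarrow> subst \<sigma> t = subst \<tau> t"
  by (induction t) auto

lemma subst_TV[simp]: "subst TV t = t"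
  by (induction t) (auto simp: map_idI)

lemma subst_ground: "tvars t = {} \<Longrightarrow> subst \<sigma> t = t"
proof -
  assume "tvars t = {}"
  then have "subst \<sigma> t = subst TV t" by (intro subst_cong) auto
  then show ?thesis by simp
qed

lemma ground_subst: "(\<And>x. tvars (\<sigma> x) = {}) \<Longrightarrow> tvars (subst \<sigma> t) = {}"
  by (induction t) auto

lemma wfb_subst: "wfb ar t \<Longrightarrow> (\<And>x. wfb ar (\<sigma> x)) \<Longrightarrow> wfb ar (subst \<sigma> t)"
  by (induction t) auto

lemma wfb_subst_rev: "wfb ar (subst \<sigma> t) \<Longrightarrow> wfb ar t"
  by (induction t) auto

lemma finite_tvars[simp]: "finite (tvars t)"
  by (induction t) auto

fun tsize :: "'c btype \<Rightarrow> nat" where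
  "tsize (TV v) = 1"
| "tsize (TC c bs) = 1 + sum_list (map tsize bs)"

lemma occurs_le: "v \<in> tvars t \<Longrightarrow> tsize (\<theta> v) \<le> tsize (subst \<theta> t)"
proof (induction t)
  case (TV x) then show ?case by simp
next
  case (TC c bs)
  then obtain b where b: "b \<in> set bs" "v \<in> tvars b" by auto
  then have "tsize (\<theta> v) \<le> tsize (subst \<theta> b)" using TC by auto
  also have "\<dots> \<le> sum_list (map tsize (map (subst \<theta>) bs))"
    using b(1) by (intro member_le_sum_list) auto
  finally show ?case by simp
qed

lemma occurs_lt: "v \<in> tvars t \<Longrightarrow> t \<noteq> TV v \<Longrightarrow> tsize (\<theta> v) < tsize (subst \<theta> t)"
proof (cases t)
  case (TV x) then show "v \<in> tvars t \<Longrightarrow> t \<noteq> TV v \<Longrightarrow> ?thesis" by simp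
next
  case (TC c bs)
  assume "v \<in> tvars t"
  then obtain b where b: "b \<in> set bs" "v \<in> tvars b" using TC by auto
  have "tsize (\<theta> v) \<le> tsize (subst \<theta> b)" by (rule occurs_le[OF b(2)])
  also have "\<dots> \<le> sum_list (map tsize (map (subst \<theta>) bs))"
    using b(1) by (intro member_le_sum_list) auto
  finally show ?thesis using TC by simp
qed

definition unifies :: "'c subst \<Rightarrow> ('c btype \<times> 'c btype) list \<Rightarrow> bool" where
  "unifies \<sigma> E \<longleftrightarrow> (\<forall>(s,t)\<in>set E. subst \<sigma> s = subst \<sigma> t)"

definition varsE :: "('c btype \<times> 'c btype) list \<Rightarrow> tvar set" where
  "varsE E = (\<Union>(s,t)\<in>set E. tvars s \<union> tvars t)"

definition sizeE :: "('c btype \<times> 'c btype) list \<Rightarrow> nat" where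
  "sizeE E = sum_list (map (\<lambda>(s,t). tsize s + tsize t) E)"

lemma finite_varsE[simp]: "finite (varsE E)"
  by (auto simp: varsE_def)

lemma sizeE_zip: "length ss = length ts \<Longrightarrow>
  sizeE (zip ss ts) = sum_list (map tsize ss) + sum_list (map tsize ts)"
  by (induction ss ts rule: list_induct2) (auto simp: sizeE_def)

lemma varsE_zip: "length ss = length ts \<Longrightarrow>
  varsE (zip ss ts) = (\<Union>b\<in>set ss. tvars b) \<union> (\<Union>b\<in>set ts. tvars b)"
  by (induction ss ts rule: list_induct2) (auto simp: varsE_def)

lemma unifies_zip: "length ss = length ts \<Longrightarrow>
  unifies \<theta> (zip ss ts) \<longleftrightarrow> map (subst \<theta>) ss = map (subst \<theta>) ts"
  by (induction ss ts rule: list_induct2) (auto simp: unifies_def)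

lemma mgu_exists:
  "unifies \<theta>0 E \<Longrightarrow> \<exists>\<sigma>. unifies \<sigma> E \<and> (\<forall>\<theta>. unifies \<theta> E \<longrightarrow> (\<forall>v. \<theta> v = subst \<theta> (\<sigma> v)))"
proof (induction E arbitrary: \<theta>0 rule: wf_induct[OF wf_measures[of "[\<lambda>E. card (varsE E), \<lambda>E. sizeE E]"]])
  case (1 E)
  show ?case
  proof (cases E)
    case Nil
    then show ?thesis by (intro exI[of _ TV]) (auto simp: unifies_def)
  next
    case (Cons p E')
    obtain s t where p: "p = (s,t)" by fastforce
    have E'u: "unifies \<theta>0 E'" using 1(2) Cons by (auto simp: unifies_def)
    have st: "subst \<theta>0 s = subst \<theta>0 t" using 1(2) Cons p by (auto simp: unifies_def)
    have varsE': "varsE E' \<subseteq> varsE E" using Cons by (auto simp: varsE_def)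
    show ?thesis
    proof (cases "s = t")
      case True
      have "card (varsE E') \<le> card (varsE E)" using varsE' by (intro card_mono) auto
      moreover have "sizeE E' < sizeE E" using Cons p
        by (cases s) (auto simp: sizeE_def)
      ultimately have "(E', E) \<in> measures [\<lambda>E. card (varsE E), \<lambda>E. sizeE E]"
        by (auto simp: measures_def)
      from 1(1)[rule_format, OF this E'u] obtain \<sigma> where
        \<sigma>: "unifies \<sigma> E'" "\<forall>\<theta>. unifies \<theta> E' \<longrightarrow> (\<forall>v. \<theta> v = subst \<theta> (\<sigma> v))" by blast
      show ?thesis using \<sigma> Cons p True by (intro exI[of _ \<sigma>]) (auto simp: unifies_def)
    next
      case False
      show ?thesis
      proof (cases "\<exists>v u. (s = TV v \<and> t = u) \<or> (s = u \<and> t = TV v)")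
        case True
        then obtain v u where vu: "(s = TV v \<and> t = u) \<or> (s = u \<and> t = TV v)" by blast
        have uneq: "u \<noteq> TV v" using vu False by auto
        have pair: "\<And>\<theta>. subst \<theta> s = subst \<theta> t \<longleftrightarrow> \<theta> v = subst \<theta> u" using vu by auto
        have "\<theta>0 v = subst \<theta>0 u" using st pair by blast
        then have vnot: "v \<notin> tvars u" using occurs_lt[of v u \<theta>0] uneq by auto
        define \<rho> where "\<rho> = TV(v := u)"
        define E2 where "E2 = map (\<lambda>(a,b). (subst \<rho> a, subst \<rho> b)) E'"
        have keyrho: "\<And>\<theta>. \<theta> v = subst \<theta> u \<Longrightarrow> subst \<theta> (subst \<rho> a) = subst \<theta> a" for a
          by (subst subst_comp, rule subst_cong) (auto simp: \<rho>_def)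
        have unif2: "\<And>\<theta>. unifies \<theta> E \<Longrightarrow> unifies \<theta> E2"
        proof -
          fix \<theta> assume u: "unifies \<theta> E"
          then have tv: "\<theta> v = subst \<theta> u" using Cons p pair by (auto simp: unifies_def)
          show "unifies \<theta> E2" using u Cons unfolding unifies_def E2_def
            by (auto simp: keyrho[OF tv])
        qed
        have tvrho: "tvars (subst \<rho> a) \<subseteq> (tvars a - {v}) \<union> tvars u" for a
          by (induction a) (auto simp: \<rho>_def vnot)
        have "varsE E2 \<subseteq> varsE E - {v}"
        proof -
          have "varsE E2 \<subseteq> (varsE E' - {v}) \<union> tvars u"
            unfolding E2_def varsE_def using tvrho by fastforce
          moreover have "tvars u \<subseteq> varsE E" using Cons p vu by (auto simp: varsE_def)
          moreover have "v \<notin> tvars u" by (rule vnot)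
          ultimately show ?thesis using varsE' by auto
        qed
        moreover have "v \<in> varsE E" using Cons p vu by (auto simp: varsE_def)
        ultimately have "card (varsE E2) < card (varsE E)"
          by (intro psubset_card_mono) auto
        then have "(E2, E) \<in> measures [\<lambda>E. card (varsE E), \<lambda>E. sizeE E]"
          by (auto simp: measures_def)
        from 1(1)[rule_format, OF this unif2[OF 1(2)]] obtain \<sigma>' where
          \<sigma>': "unifies \<sigma>' E2" "\<forall>\<theta>. unifies \<theta> E2 \<longrightarrow> (\<forall>v. \<theta> v = subst \<theta> (\<sigma>' v))" by blast
        define \<sigma> where "\<sigma> = (\<lambda>x. subst \<sigma>' (\<rho> x))"
        have sig_app: "subst \<sigma> a = subst \<sigma>' (subst \<rho> a)" for a
          by (simp add: subst_comp \<sigma>_def)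
        have "subst \<sigma> u = subst \<sigma>' u"
          unfolding sig_app by (rule arg_cong[where f="subst \<sigma>'"], subst subst_cong[of u _ TV])
             (auto simp: \<rho>_def vnot)
        then have hv: "\<sigma> v = subst \<sigma> u" by (simp add: \<sigma>_def \<rho>_def)
        have "subst \<sigma> s = subst \<sigma> t" using pair hv by blast
        then have "unifies \<sigma> E"
          using \<sigma>'(1) Cons p unfolding unifies_def E2_def by (auto simp: sig_app)
        moreover have "\<forall>\<theta>. unifies \<theta> E \<longrightarrow> (\<forall>x. \<theta> x = subst \<theta> (\<sigma> x))"
        proof (intro allI impI)
          fix \<theta> x assume u: "unifies \<theta> E"
          then have tv: "\<theta> v = subst \<theta> u" using Cons p pair by (auto simp: unifies_def)
          have h: "\<forall>y. \<theta> y = subst \<theta> (\<sigma>' y)" using \<sigma>'(2) unif2[OF u] by blast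
          have "subst \<theta> (\<sigma> x) = subst (\<lambda>y. subst \<theta> (\<sigma>' y)) (\<rho> x)"
            by (simp add: \<sigma>_def subst_comp)
          also have "(\<lambda>y. subst \<theta> (\<sigma>' y)) = \<theta>" using h by auto
          also have "subst \<theta> (\<rho> x) = \<theta> x" using tv by (auto simp: \<rho>_def)
          finally show "\<theta> x = subst \<theta> (\<sigma> x)" by simp
        qed
        ultimately show ?thesis by blast
      next
        case noVar: False
        then obtain c ss d ts where sc: "s = TC c ss" "t = TC d ts"
          by (cases s; cases t) auto
        have cd: "c = d" and len: "length ss = length ts"
          using st sc by (auto dest: map_eq_imp_length_eq)
        define E2 where "E2 = zip ss ts @ E'"
        have eqv: "\<And>\<theta>. unifies \<theta> E \<longleftrightarrow> unifies \<theta> E2"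
          using Cons p sc cd len by (auto simp: unifies_def E2_def unifies_zip[symmetric])
        have "varsE E2 = varsE E"
          using Cons p sc len by (auto simp: varsE_def E2_def varsE_zip[symmetric])
        moreover have "sizeE E2 < sizeE E"
          using Cons p sc len by (auto simp: sizeE_def E2_def sizeE_zip[symmetric])
        ultimately have "(E2, E) \<in> measures [\<lambda>E. card (varsE E), \<lambda>E. sizeE E]"
          by (auto simp: measures_def)
        from 1(1)[rule_format, OF this] eqv 1(2) show ?thesis by metis
      qed
    qed
  qed
qed


fun pairE :: "'c bbtype \<times> 'c bbtype \<Rightarrow> ('c btype \<times> 'c btype) list" where
  "pairE (Some a, Some b) = [(a,b)]"
| "pairE _ = []"

lemma unifies_pairE:
  assumes "\<forall>(x, y)\<in>set ps. app_subst (Some \<theta>0) x = app_subst (Some \<theta>0) y"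
  shows "unifies \<theta> (concat (map pairE ps)) \<longleftrightarrow>
         (\<forall>(x, y)\<in>set ps. app_subst (Some \<theta>) x = app_subst (Some \<theta>) y)"
  using assms
proof (induction ps)
  case Nil then show ?case by (simp add: unifies_def)
next
  case (Cons p ps)
  obtain x y where p: "p = (x,y)" by fastforce
  have "app_subst (Some \<theta>0) x = app_subst (Some \<theta>0) y" using Cons.prems p by auto
  then have "(x = None \<and> y = None) \<or> (\<exists>a b. x = Some a \<and> y = Some b)"
    by (cases x; cases y) auto
  then show ?case using Cons p by (auto simp: unifies_def)
qed

lemma mgu_unifier: "mgu ar ps = Some \<sigma> \<Longrightarrow> is_unifier ar ps \<sigma>"
proof -
  assume m: "mgu ar ps = Some \<sigma>"
  show ?thesis
  proof (cases "ps = []")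
    case True
    then show ?thesis using m by (auto simp: mgu_def is_unifier_def is_subst_def)
  next
    case False
    then obtain \<theta>0 where t0: "is_unifier ar ps \<theta>0" and s: "\<sigma> = (SOME \<sigma>. is_mgu ar ps \<sigma>)"
      using m by (auto simp: mgu_def split: if_splits)
    have t0u: "\<forall>(x, y)\<in>set ps. app_subst (Some \<theta>0) x = app_subst (Some \<theta>0) y"
      using t0 by (auto simp: is_unifier_def)
    have "unifies \<theta>0 (concat (map pairE ps))" using unifies_pairE[OF t0u] t0u by blast
    from mgu_exists[OF this] obtain \<sigma>1 where
      s1: "unifies \<sigma>1 (concat (map pairE ps))"
          "\<forall>\<theta>. unifies \<theta> (concat (map pairE ps)) \<longrightarrow> (\<forall>v. \<theta> v = subst \<theta> (\<sigma>1 v))" by blast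
    have "is_subst ar \<sigma>1"
      unfolding is_subst_def
    proof
      fix v
      have "wfb ar (subst \<theta>0 (\<sigma>1 v))"
        using s1(2) unifies_pairE[OF t0u] t0u t0 by (metis is_unifier_def is_subst_def)
      then show "wfb ar (\<sigma>1 v)" by (rule wfb_subst_rev)
    qed
    then have "is_mgu ar ps \<sigma>1"
      unfolding is_mgu_def is_unifier_def
      using s1 unifies_pairE[OF t0u] by blast
    then have "is_mgu ar ps \<sigma>" unfolding s by (rule someI[where P="is_mgu ar ps"])
    then show ?thesis by (simp add: is_mgu_def)
  qed
qed


lemma tt_unfold: "\<Lambda> c = Some (args, res) \<Longrightarrow> \<exists>\<rho>. type_transformer ar \<Lambda> c Bs =
   app_subst (mgu ar (zip Bs (map Some (map (subst (TV \<circ> \<rho>)) args)))) (Some (subst (TV \<circ> \<rho>) res))"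
  unfolding type_transformer_def rename_ty_def by (auto simp: Let_def)

theorem mainTheorem3:
  fixes ar :: "'c \<Rightarrow> nat" and \<Lambda> :: "('n, 'c) library" and \<Gamma> :: "('v, 'c) env"
    and e :: "('n, 'v) aterm" and B :: "'c bbtype" and b :: "'c btype"
  assumes "wf_library ar \<Lambda>"
    and "wf_env ar \<Gamma>"
    and "ground b" and "wfb ar b"
    and "infer ar \<Lambda> \<Gamma> e B"
    and "inst_le ar (Some b) B"
  shows "decl_typing ar \<Lambda> \<Gamma> e b"
  using assms(5,3,4,6)
proof (induction arbitrary: b rule: infer.induct)
  case (IVar x b')
  then obtain \<theta> where "b = subst \<theta> b'" by (auto simp: inst_le_def)
  moreover have "ground b'" using IVar(1) assms(2) by (auto simp: wf_env_def)
  ultimately have "b = b'" by (simp add: ground_def subst_ground)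
  then show ?case using IVar(1) by (auto intro: decl_typing.DVar)
next
  case (IApp c args res es Bs b)
  from tt_unfold[of \<Lambda> c args res ar Bs, OF IApp(1)] obtain \<rho> where tt:
    "type_transformer ar \<Lambda> c Bs = app_subst (mgu ar (zip Bs (map Some (map (subst (TV \<circ> \<rho>)) args))))
        (Some (subst (TV \<circ> \<rho>) res))" by blast
  define args' where "args' = map (subst (TV \<circ> \<rho>)) args"
  define res' where "res' = subst (TV \<circ> \<rho>) res"
  obtain \<theta> where th: "is_subst ar \<theta>" "Some b = app_subst (Some \<theta>) (type_transformer ar \<Lambda> c Bs)"
    using IApp(6) by (auto simp: inst_le_def)
  then obtain \<sigma>0 where m: "mgu ar (zip Bs (map Some args')) = Some \<sigma>0"
    and bth: "b = subst \<theta> (subst \<sigma>0 res')"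
    unfolding tt args'_def res'_def by (cases "mgu ar (zip Bs (map Some (map (subst (TV \<circ> \<rho>)) args)))") auto
  have u0: "is_unifier ar (zip Bs (map Some args')) \<sigma>0" by (rule mgu_unifier[OF m])
  have lenBs: "length Bs = length es" using IApp(3) by (simp add: list_all2_lengthD)
  have lenA: "length args' = length args" by (simp add: args'_def)
  have wfl: "\<forall>B\<in>set (res # args). wfb ar B" using assms(1) IApp(1) by (auto simp: wf_library_def)
  define \<gamma> :: "'c subst" where "\<gamma> = (\<lambda>_. b)"
  define \<sigma>s where "\<sigma>s = (\<lambda>x. subst \<gamma> (subst \<theta> (\<sigma>0 x)))"
  define \<sigma>d where "\<sigma>d = (\<lambda>x. \<sigma>s (\<rho> x))"
  have s0: "is_subst ar \<sigma>0" using u0 by (simp add: is_unifier_def)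
  have wfs: "wfb ar (\<sigma>s x)" for x
    unfolding \<sigma>s_def using s0 th(1) IApp(5)
    by (intro wfb_subst) (auto simp: is_subst_def \<gamma>_def)
  have wfd: "wfb ar (\<sigma>d x)" for x using wfs by (simp add: \<sigma>d_def)
  have grs: "tvars (\<sigma>s x) = {}" for x
    unfolding \<sigma>s_def using IApp(4) by (intro ground_subst) (simp add: \<gamma>_def ground_def)
  have grd: "tvars (\<sigma>d x) = {}" for x using grs by (simp add: \<sigma>d_def)
  have sd: "subst \<sigma>d t = subst \<sigma>s (subst (TV \<circ> \<rho>) t)" for t
    by (simp add: subst_comp \<sigma>d_def)
  have ss: "subst \<sigma>s t = subst \<gamma> (subst \<theta> (subst \<sigma>0 t))" for t
    by (simp add: subst_comp \<sigma>s_def)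
  have bres: "subst \<sigma>d res = b"
    using IApp(4) by (simp add: sd ss bth[symmetric] res'_def[symmetric] subst_ground ground_def)
  have all: "list_all2 (decl_typing ar \<Lambda> \<Gamma>) es (map (subst \<sigma>d) args)"
  proof (rule list_all2_all_nthI)
    show "length es = length (map (subst \<sigma>d) args)" using IApp(2) by simp
  next
    fix i assume i: "i < length es"
    have iB: "i < length Bs" using i lenBs by simp
    have "(Bs ! i, Some (args' ! i)) \<in> set (zip Bs (map Some args'))"
      using i lenBs lenA IApp(2) by (auto simp: in_set_zip)
    then have eq: "app_subst (Some \<sigma>0) (Bs ! i) = Some (subst \<sigma>0 (args' ! i))"
      using u0 by (auto simp: is_unifier_def)
    then obtain Bi where Bi: "Bs ! i = Some Bi" "subst \<sigma>0 Bi = subst \<sigma>0 (args' ! i)"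
      by (cases "Bs ! i") auto
    have ai: "args' ! i = subst (TV \<circ> \<rho>) (args ! i)" using i IApp(2) by (simp add: args'_def)
    have bi: "subst \<sigma>d (args ! i) = subst \<sigma>s Bi"
      by (simp add: sd ss Bi(2) ai[symmetric])
    have IH: "\<forall>b. ground b \<longrightarrow> wfb ar b \<longrightarrow> inst_le ar (Some b) (Bs ! i) \<longrightarrow> decl_typing ar \<Lambda> \<Gamma> (es ! i) b"
      using list_all2_nthD[OF IApp(3) i] by blast
    have "ground (subst \<sigma>d (args ! i))" unfolding ground_def by (rule ground_subst[OF grd])
    moreover have "wfb ar (subst \<sigma>d (args ! i))"
      using wfl i IApp(2) wfd by (intro wfb_subst) auto
    moreover have "inst_le ar (Some (subst \<sigma>d (args ! i))) (Bs ! i)"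
      unfolding inst_le_def using wfs bi Bi(1) by (auto simp: is_subst_def)
    ultimately have "decl_typing ar \<Lambda> \<Gamma> (es ! i) (subst \<sigma>d (args ! i))" using IH by blast
    then show "decl_typing ar \<Lambda> \<Gamma> (es ! i) (map (subst \<sigma>d) args ! i)"
      using i IApp(2) by simp
  qed
  have "decl_typing ar \<Lambda> \<Gamma> (App c es) (subst \<sigma>d res)"
  proof (rule decl_typing.DApp[OF IApp(1) _ IApp(2) _ all])
    show "is_subst ar \<sigma>d" using wfd by (simp add: is_subst_def)
    show "\<forall>B\<in>set (res # args). ground (subst \<sigma>d B)"
      unfolding ground_def using ground_subst[of \<sigma>d, OF grd] by blast
  qed
  then show ?case by (simp add: bres)
qed

end
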